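(* Let $E$ be a graph, let $R$ be a unital subring of $\mathbb C$ closed under complex conjugation that has an essentially unique partition of the unit, let $x\in L_R(E)$ and $\lambda\in R$. If $\alpha,\beta\in E^*$ satisfy $2x=\alpha+\lambda\beta$ in $L_R(E)$, then $\alpha=\beta$.
   Context: A unital subring $R\subseteq\mathbb C$ closed under complex conjugation has an essentially unique partition of the unit if whenever $\lambda_1,\dots,\lambda_n\in R$ satisfy $\sum_{i=1}^n|\lambda_i|^2=1$, all but one of the $\lambda_i$ are zero. A graph $E=(E^0,E^1,r,s)$ has vertices $E^0$, edges $E^1$, and range and source maps $r,s$. A path is a word $e_1\cdots e_n$ with $r(e_i)=s(e_{i+1})$; vertices are paths of length $0$; $E^*$ is the set of finite paths, and a path $\alpha=e_1\cdots e_n$ is identified with the product $e_1\cdots e_n$ in $L_R(E)$. The Leavitt path algebra $L_R(E)$ is the universal $R$-algebra generated by pairwise orthogonal idempotents $\{v\}_{v\in E^0}$ and $\{e,e^*\}_{e\in E^1}$ with: $e^*f=0$ for $e\ne f$; $e^*e=r(e)$; $s(e)e=e=er(e)$; $e^*s(e)=e^*=r(e)e^*$; and $v=\sum_{e\in s^{-1}(v)}ee^*$ whenever $s^{-1}(v)$ is finite and nonempty. *)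

theory Defs
  imports Complex_Main
begin

definition conj_closed_unital_subring :: "complex set \<Rightarrow> bool" where
  "conj_closed_unital_subring R \<longleftrightarrow> 0 \<in> R \<and> 1 \<in> R \<and>
     (\<forall>a\<in>R. \<forall>b\<in>R. a + b \<in> R \<and> a - b \<in> R \<and> a * b \<in> R) \<and>
     (\<forall>a\<in>R. cnj a \<in> R)"

definition ess_unique_partition_of_unit :: "complex set \<Rightarrow> bool" where
  "ess_unique_partition_of_unit R \<longleftrightarrow>
     (\<forall>(n::nat) (l::nat \<Rightarrow> complex). (\<forall>i<n. l i \<in> R) \<and> (\<Sum>i<n. (cmod (l i))\<^sup>2) = 1
        \<longrightarrow> (\<exists>j<n. \<forall>i<n. i \<noteq> j \<longrightarrow> l i = 0))"

text \<open>A graph is given by a vertex set V, an edge set Ed, and range/source maps r, s.\<close>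

definition is_graph :: "'v set \<Rightarrow> 'e set \<Rightarrow> ('e \<Rightarrow> 'v) \<Rightarrow> ('e \<Rightarrow> 'v) \<Rightarrow> bool" where
  "is_graph V Ed r s \<longleftrightarrow> (\<forall>e\<in>Ed. r e \<in> V \<and> s e \<in> V)"

datatype ('v, 'e) path = PVtx 'v | PEdges "'e list"

fun is_path :: "'v set \<Rightarrow> 'e set \<Rightarrow> ('e \<Rightarrow> 'v) \<Rightarrow> ('e \<Rightarrow> 'v) \<Rightarrow> ('v, 'e) path \<Rightarrow> bool" where
  "is_path V Ed r s (PVtx v) \<longleftrightarrow> v \<in> V"
| "is_path V Ed r s (PEdges es) \<longleftrightarrow> es \<noteq> [] \<and> set es \<subseteq> Ed \<and>
      (\<forall>i. Suc i < length es \<longrightarrow> r (es ! i) = s (es ! Suc i))"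

datatype ('v, 'e) gen = Vtx 'v | Edg 'e | Ghost 'e

type_synonym ('v, 'e) fa = "('v, 'e) gen list \<Rightarrow> complex"

definition fa_word :: "('v, 'e) gen list \<Rightarrow> ('v, 'e) fa" where
  "fa_word u = (\<lambda>w. if w = u then 1 else 0)"

definition fa_add :: "('v, 'e) fa \<Rightarrow> ('v, 'e) fa \<Rightarrow> ('v, 'e) fa" where
  "fa_add p q = (\<lambda>w. p w + q w)"

definition fa_diff :: "('v, 'e) fa \<Rightarrow> ('v, 'e) fa \<Rightarrow> ('v, 'e) fa" where
  "fa_diff p q = (\<lambda>w. p w - q w)"

definition fa_smult :: "complex \<Rightarrow> ('v, 'e) fa \<Rightarrow> ('v, 'e) fa" where
  "fa_smult c p = (\<lambda>w. c * p w)"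

definition fa_mult :: "('v, 'e) fa \<Rightarrow> ('v, 'e) fa \<Rightarrow> ('v, 'e) fa" where
  "fa_mult p q = (\<lambda>w. \<Sum>i\<le>length w. p (take i w) * q (drop i w))"

text \<open>Elements of the free non-unital R-algebra: finitely supported, coefficients in R,
  no constant term.\<close>
definition free_alg :: "complex set \<Rightarrow> ('v, 'e) fa set" where
  "free_alg R = {p. finite {w. p w \<noteq> 0} \<and> (\<forall>w. p w \<in> R) \<and> p [] = 0}"

text \<open>The defining relations of the Leavitt path algebra (each relation u = w is encoded as u - w).\<close>
inductive_set leavitt_rels ::
  "'v set \<Rightarrow> 'e set \<Rightarrow> ('e \<Rightarrow> 'v) \<Rightarrow> ('e \<Rightarrow> 'v) \<Rightarrow> ('v, 'e) fa set"
  for V Ed r s where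
  idem: "v \<in> V \<Longrightarrow> fa_diff (fa_word [Vtx v, Vtx v]) (fa_word [Vtx v]) \<in> leavitt_rels V Ed r s"
| orth: "v \<in> V \<Longrightarrow> w \<in> V \<Longrightarrow> v \<noteq> w \<Longrightarrow> fa_word [Vtx v, Vtx w] \<in> leavitt_rels V Ed r s"
| ghost_orth: "e \<in> Ed \<Longrightarrow> f \<in> Ed \<Longrightarrow> e \<noteq> f \<Longrightarrow> fa_word [Ghost e, Edg f] \<in> leavitt_rels V Ed r s"
| ck1: "e \<in> Ed \<Longrightarrow> fa_diff (fa_word [Ghost e, Edg e]) (fa_word [Vtx (r e)]) \<in> leavitt_rels V Ed r s"
| src_edge: "e \<in> Ed \<Longrightarrow> fa_diff (fa_word [Vtx (s e), Edg e]) (fa_word [Edg e]) \<in> leavitt_rels V Ed r s"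
| edge_rng: "e \<in> Ed \<Longrightarrow> fa_diff (fa_word [Edg e, Vtx (r e)]) (fa_word [Edg e]) \<in> leavitt_rels V Ed r s"
| ghost_src: "e \<in> Ed \<Longrightarrow> fa_diff (fa_word [Ghost e, Vtx (s e)]) (fa_word [Ghost e]) \<in> leavitt_rels V Ed r s"
| rng_ghost: "e \<in> Ed \<Longrightarrow> fa_diff (fa_word [Vtx (r e), Ghost e]) (fa_word [Ghost e]) \<in> leavitt_rels V Ed r s"
| ck2: "v \<in> V \<Longrightarrow> finite {e \<in> Ed. s e = v} \<Longrightarrow> {e \<in> Ed. s e = v} \<noteq> {} \<Longrightarrow>
        fa_diff (fa_word [Vtx v]) (\<lambda>w. \<Sum>e\<in>{e \<in> Ed. s e = v}. fa_word [Edg e, Ghost e] w)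
          \<in> leavitt_rels V Ed r s"

inductive_set leavitt_ideal ::
  "complex set \<Rightarrow> 'v set \<Rightarrow> 'e set \<Rightarrow> ('e \<Rightarrow> 'v) \<Rightarrow> ('e \<Rightarrow> 'v) \<Rightarrow> ('v, 'e) fa set"
  for R V Ed r s where
  rel: "p \<in> leavitt_rels V Ed r s \<Longrightarrow> p \<in> leavitt_ideal R V Ed r s"
| add: "p \<in> leavitt_ideal R V Ed r s \<Longrightarrow> q \<in> leavitt_ideal R V Ed r s \<Longrightarrow>
        fa_add p q \<in> leavitt_ideal R V Ed r s"
| smult: "c \<in> R \<Longrightarrow> p \<in> leavitt_ideal R V Ed r s \<Longrightarrow> fa_smult c p \<in> leavitt_ideal R V Ed r s"
| lmult: "p \<in> leavitt_ideal R V Ed r s \<Longrightarrow> fa_mult (fa_word [g]) p \<in> leavitt_ideal R V Ed r s"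
| rmult: "p \<in> leavitt_ideal R V Ed r s \<Longrightarrow> fa_mult p (fa_word [g]) \<in> leavitt_ideal R V Ed r s"

definition leavitt_eq ::
  "complex set \<Rightarrow> 'v set \<Rightarrow> 'e set \<Rightarrow> ('e \<Rightarrow> 'v) \<Rightarrow> ('e \<Rightarrow> 'v) \<Rightarrow> ('v, 'e) fa \<Rightarrow> ('v, 'e) fa \<Rightarrow> bool" where
  "leavitt_eq R V Ed r s p q \<longleftrightarrow> fa_diff p q \<in> leavitt_ideal R V Ed r s"

fun path_elt :: "('v, 'e) path \<Rightarrow> ('v, 'e) fa" where
  "path_elt (PVtx v) = fa_word [Vtx v]"
| "path_elt (PEdges es) = fa_word (map Edg es)"

end

theory Submission
  imports Defs
begin

definition supp :: "('v, 'e) fa \<Rightarrow> ('v, 'e) gen list set" where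
  "supp p = {w. p w \<noteq> 0}"

definition shift :: "'e \<Rightarrow> (nat \<Rightarrow> 'e option) \<Rightarrow> nat \<Rightarrow> 'e option" where
  "shift e p = (\<lambda>i. case i of 0 \<Rightarrow> Some e | Suc j \<Rightarrow> p j)"

lemma shift0[simp]: "shift e p 0 = Some e" and shiftS[simp]: "shift e p (Suc j) = p j"
  by (auto simp: shift_def)

lemma tail_shift[simp]: "(\<lambda>i. shift e p (Suc i)) = p" by simp

lemma shift_tail: "p 0 = Some e \<Longrightarrow> shift e (\<lambda>i. p (Suc i)) = p"
  by (rule ext) (auto simp: shift_def split: nat.split)

context
  fixes Ed :: "'e set" and r s :: "'e \<Rightarrow> 'v"
begin

definition regular :: "'v \<Rightarrow> bool" where
  "regular v \<longleftrightarrow> finite {e \<in> Ed. s e = v} \<and> {e \<in> Ed. s e = v} \<noteq> {}"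

definition nxt :: "'v \<Rightarrow> 'e" where
  "nxt v = (SOME e. e \<in> Ed \<and> s e = v)"

lemma nxt: "regular v \<Longrightarrow> nxt v \<in> Ed \<and> s (nxt v) = v"
  unfolding regular_def nxt_def by (rule someI_ex) auto

fun tp :: "'v \<Rightarrow> nat \<Rightarrow> 'e option" where
  "tp v 0 = (if regular v then Some (nxt v) else None)"
| "tp v (Suc i) = (if regular v then tp (r (nxt v)) i else None)"

fun bp :: "'v \<Rightarrow> 'e list \<Rightarrow> nat \<Rightarrow> 'e option" where
  "bp u [] = tp u"
| "bp u (e # g) = shift e (bp (r e) g)"

fun chain :: "'v \<Rightarrow> 'e list \<Rightarrow> bool" where
  "chain u [] = True"
| "chain u (e # g) = (e \<in> Ed \<and> s e = u \<and> chain (r e) g)"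

definition Valid :: "(int \<times> 'v \<times> (nat \<Rightarrow> 'e option)) set" where
  "Valid = {(n, u, bp u g) | n u g. chain u g}"

fun gen_act :: "('v, 'e) gen \<Rightarrow> int \<times> 'v \<times> (nat \<Rightarrow> 'e option) \<Rightarrow> (int \<times> 'v \<times> (nat \<Rightarrow> 'e option)) option" where
  "gen_act (Vtx v) (n, u, p) = (if u = v then Some (n, u, p) else None)"
| "gen_act (Edg e) (n, u, p) = (if u = r e \<and> e \<in> Ed then Some (n + 1, s e, shift e p) else None)"
| "gen_act (Ghost e) (n, u, p) = (if u = s e \<and> p 0 = Some e then Some (n - 1, r e, \<lambda>i. p (Suc i)) else None)"

fun act :: "('v, 'e) gen list \<Rightarrow> int \<times> 'v \<times> (nat \<Rightarrow> 'e option) \<Rightarrow> (int \<times> 'v \<times> (nat \<Rightarrow> 'e option)) option" where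
  "act [] z = Some z"
| "act (g # w) z = Option.bind (act w z) (gen_act g)"

lemma act_append: "act (w @ [g]) z = Option.bind (gen_act g z) (act w)"
  by (induction w) (auto simp: bind_assoc)

lemma act_single[simp]: "act [g] z = gen_act g z" by simp

definition phi :: "int \<times> 'v \<times> (nat \<Rightarrow> 'e option) \<Rightarrow> (int \<times> 'v \<times> (nat \<Rightarrow> 'e option)) set \<Rightarrow> ('v, 'e) fa \<Rightarrow> complex" where
  "phi z Y p = (\<Sum>w\<in>supp p. p w * of_bool (act w z \<in> Some ` Y))"

lemma phi_sub: "finite S \<Longrightarrow> supp p \<subseteq> S \<Longrightarrow> phi z Y p = (\<Sum>w\<in>S. p w * of_bool (act w z \<in> Some ` Y))"
  unfolding phi_def by (rule sum.mono_neutral_left) (auto simp: supp_def)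

lemma Valid_tail:
  assumes "(n, u, p) \<in> Valid" "u = s e" "p 0 = Some e"
  shows "(n - 1, r e, \<lambda>i. p (Suc i)) \<in> Valid"
proof -
  obtain g where p: "p = bp u g" and c: "chain u g" using assms(1) unfolding Valid_def by auto
  show ?thesis
  proof (cases g)
    case Nil
    then have reg: "regular u" and e: "e = nxt u" using assms p by (auto split: if_splits)
    have "(\<lambda>i. p (Suc i)) = bp (r e) []" using Nil p reg e by (auto)
    then show ?thesis unfolding Valid_def by (auto intro!: exI[of _ "[]"])
  next
    case (Cons e' g')
    then have "e' = e" using assms p by simp
    then show ?thesis using Cons p c unfolding Valid_def by force
  qed
qed

lemma Valid_gen: "z \<in> Valid \<Longrightarrow> gen_act g z = Some z' \<Longrightarrow> z' \<in> Valid"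
proof (cases g)
  case (Vtx v)
  then show "z \<in> Valid \<Longrightarrow> gen_act g z = Some z' \<Longrightarrow> z' \<in> Valid"
    by (cases z) (auto split: if_splits)
next
  case (Edg e)
  assume z: "z \<in> Valid" and a: "gen_act g z = Some z'"
  obtain n u g' where zz: "z = (n, u, bp u g')" and c: "chain u g'" using z unfolding Valid_def by auto
  have "u = r e" "e \<in> Ed" "z' = (n + 1, s e, bp (s e) (e # g'))" using a Edg zz by (auto split: if_splits)
  then show ?thesis using c unfolding Valid_def by (auto intro!: exI[of _ "e # g'"])
next
  case (Ghost e)
  assume z: "z \<in> Valid" and a: "gen_act g z = Some z'"
  obtain n u p where zz: "z = (n, u, p)" by (cases z)
  show ?thesis using a z zz Ghost Valid_tail[of n u p e] by (auto split: if_splits)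
qed

lemma Valid_reg:
  assumes "(n, v, p) \<in> Valid" "regular v"
  shows "\<exists>e. e \<in> Ed \<and> s e = v \<and> p 0 = Some e"
proof -
  obtain g where p: "p = bp v g" and c: "chain v g" using assms(1) unfolding Valid_def by auto
  show ?thesis
  proof (cases g)
    case Nil then show ?thesis using p nxt[OF assms(2)] assms(2) by auto
  next
    case (Cons e g') then show ?thesis using p c by auto
  qed
qed

lemma sum_word: "finite W \<Longrightarrow> a \<in> W \<Longrightarrow> (\<Sum>w\<in>W. fa_word a w * f w) = f a"
proof -
  assume "finite W" "a \<in> W"
  have "(\<Sum>w\<in>W. fa_word a w * f w) = (\<Sum>w\<in>W. if a = w then f a else 0)"
    by (rule sum.cong) (auto simp: fa_word_def)
  then show ?thesis using \<open>finite W\<close> \<open>a \<in> W\<close> by (simp add: sum.delta)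
qed

lemma phi_diff_word:
  "phi z Y (fa_diff (fa_word a) (fa_word b)) =
     of_bool (act a z \<in> Some ` Y) - of_bool (act b z \<in> Some ` Y)"
proof -
  have "supp (fa_diff (fa_word a) (fa_word b)) \<subseteq> {a, b}"
    by (auto simp: supp_def fa_diff_def fa_word_def)
  then have "phi z Y (fa_diff (fa_word a) (fa_word b)) =
     (\<Sum>w\<in>{a,b}. (fa_word a w - fa_word b w) * of_bool (act w z \<in> Some ` Y))"
    by (subst phi_sub) (auto simp: fa_diff_def)
  also have "\<dots> = (\<Sum>w\<in>{a,b}. fa_word a w * of_bool (act w z \<in> Some ` Y))
      - (\<Sum>w\<in>{a,b}. fa_word b w * of_bool (act w z \<in> Some ` Y))"
    by (simp add: left_diff_distrib sum_subtractf)
  also have "\<dots> = of_bool (act a z \<in> Some ` Y) - of_bool (act b z \<in> Some ` Y)"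
    by (subst sum_word, simp, simp)+ simp
  finally show ?thesis .
qed

lemma phi_word: "phi z Y (fa_word a) = of_bool (act a z \<in> Some ` Y)"
proof -
  have "supp (fa_word a) \<subseteq> {a}" by (auto simp: supp_def fa_word_def)
  then show ?thesis by (subst phi_sub[of "{a}"]) (auto simp: fa_word_def)
qed

lemma lmult_eq: "fa_mult (fa_word [g]) p w = (case w of [] \<Rightarrow> 0 | h # t \<Rightarrow> if h = g then p t else 0)"
proof (cases w)
  case Nil then show ?thesis by (simp add: fa_mult_def fa_word_def)
next
  case (Cons h t)
  have "fa_mult (fa_word [g]) p w = (\<Sum>i\<le>length w. if i = 1 then (if h = g then p t else 0) else 0)"
    unfolding fa_mult_def
  proof (rule sum.cong[OF refl])
    fix i assume ii: "i \<in> {..length w}"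
    show "fa_word [g] (take i w) * p (drop i w) = (if i = 1 then (if h = g then p t else 0) else 0)"
      using Cons ii by (cases i) (auto simp: fa_word_def)
  qed
  also have "\<dots> = (if h = g then p t else 0)" using Cons apply (simp add: sum.delta) by (cases t) auto
  finally show ?thesis using Cons by simp
qed

lemma rmult_eq: "fa_mult p (fa_word [g]) w = (if w \<noteq> [] \<and> last w = g then p (butlast w) else 0)"
proof (cases "w = []")
  case True then show ?thesis by (simp add: fa_mult_def fa_word_def)
next
  case False
  have "fa_mult p (fa_word [g]) w = (\<Sum>i\<le>length w. if i = length w - 1 then (if last w = g then p (butlast w) else 0) else 0)"
    unfolding fa_mult_def
  proof (rule sum.cong[OF refl])
    fix i assume i: "i \<in> {..length w}"
    have d: "drop i w = [g] \<longleftrightarrow> i = length w - 1 \<and> last w = g"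
    proof
      assume "drop i w = [g]"
      then have "length (drop i w) = 1" by simp
      then have "i = length w - 1" by simp
      moreover have "last w = g" using \<open>drop i w = [g]\<close> False
        by (metis append_take_drop_id last_appendR last_snoc not_Cons_self2 append_Nil)
      ultimately show "i = length w - 1 \<and> last w = g" by simp
    next
      assume "i = length w - 1 \<and> last w = g"
      then show "drop i w = [g]" using False
        by (metis append_butlast_last_id append_eq_conv_conj length_butlast)
    qed
    have t: "i = length w - 1 \<Longrightarrow> take i w = butlast w" by (simp add: butlast_conv_take)
    show "p (take i w) * fa_word [g] (drop i w) = (if i = length w - 1 then (if last w = g then p (butlast w) else 0) else 0)"
      using d t by (auto simp: fa_word_def)
  qed
  also have "\<dots> = (if last w = g then p (butlast w) else 0)" by (simp add: sum.delta)
  finally show ?thesis using False by simp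
qed

lemma main_ind:
  assumes "p \<in> leavitt_ideal R V Ed r s"
  shows "finite (supp p) \<and> (\<forall>z\<in>Valid. \<forall>Y. phi z Y p = 0)"
  using assms
proof (induction rule: leavitt_ideal.induct)
  case (rel p)
  then show ?case
  proof (induction rule: leavitt_rels.induct)
    case (idem v)
    have "finite (supp (fa_diff (fa_word [Vtx v, Vtx v]) (fa_word [Vtx v])))"
      by (rule finite_subset[of _ "{[Vtx v, Vtx v], [Vtx v]}"]) (auto simp: supp_def fa_diff_def fa_word_def)
    moreover have "act [Vtx v, Vtx v] z = act [Vtx v] z" for z by (cases z) auto
    ultimately show ?case by (simp add: phi_diff_word)
  next
    case (orth v w)
    have "finite (supp (fa_word [Vtx v, Vtx w]))"
      by (rule finite_subset[of _ "{[Vtx v, Vtx w]}"]) (auto simp: supp_def fa_word_def)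
    moreover have "act [Vtx v, Vtx w] z = None" for z using orth by (cases z) auto
    ultimately show ?case by (simp add: phi_word)
  next
    case (ghost_orth e f)
    have "finite (supp (fa_word [Ghost e, Edg f]))"
      by (rule finite_subset[of _ "{[Ghost e, Edg f]}"]) (auto simp: supp_def fa_word_def)
    moreover have "act [Ghost e, Edg f] z = None" for z using ghost_orth by (cases z) auto
    ultimately show ?case by (simp add: phi_word)
  next
    case (ck1 e)
    have "finite (supp (fa_diff (fa_word [Ghost e, Edg e]) (fa_word [Vtx (r e)])))"
      by (rule finite_subset[of _ "{[Ghost e, Edg e], [Vtx (r e)]}"]) (auto simp: supp_def fa_diff_def fa_word_def)
    moreover have "act [Ghost e, Edg e] z = act [Vtx (r e)] z" for z using ck1 by (cases z) auto
    ultimately show ?case by (simp add: phi_diff_word)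
  next
    case (src_edge e)
    have "finite (supp (fa_diff (fa_word [Vtx (s e), Edg e]) (fa_word [Edg e])))"
      by (rule finite_subset[of _ "{[Vtx (s e), Edg e], [Edg e]}"]) (auto simp: supp_def fa_diff_def fa_word_def)
    moreover have "act [Vtx (s e), Edg e] z = act [Edg e] z" for z by (cases z) auto
    ultimately show ?case by (simp add: phi_diff_word)
  next
    case (edge_rng e)
    have "finite (supp (fa_diff (fa_word [Edg e, Vtx (r e)]) (fa_word [Edg e])))"
      by (rule finite_subset[of _ "{[Edg e, Vtx (r e)], [Edg e]}"]) (auto simp: supp_def fa_diff_def fa_word_def)
    moreover have "act [Edg e, Vtx (r e)] z = act [Edg e] z" for z by (cases z) auto
    ultimately show ?case by (simp add: phi_diff_word)
  next
    case (ghost_src e)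
    have "finite (supp (fa_diff (fa_word [Ghost e, Vtx (s e)]) (fa_word [Ghost e])))"
      by (rule finite_subset[of _ "{[Ghost e, Vtx (s e)], [Ghost e]}"]) (auto simp: supp_def fa_diff_def fa_word_def)
    moreover have "act [Ghost e, Vtx (s e)] z = act [Ghost e] z" for z by (cases z) auto
    ultimately show ?case by (simp add: phi_diff_word)
  next
    case (rng_ghost e)
    have "finite (supp (fa_diff (fa_word [Vtx (r e), Ghost e]) (fa_word [Ghost e])))"
      by (rule finite_subset[of _ "{[Vtx (r e), Ghost e], [Ghost e]}"]) (auto simp: supp_def fa_diff_def fa_word_def)
    moreover have "act [Vtx (r e), Ghost e] z = act [Ghost e] z" for z by (cases z) auto
    ultimately show ?case by (simp add: phi_diff_word)
  next
    case (ck2 v)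
    define S where "S = {e \<in> Ed. s e = v}"
    have fS: "finite S" and reg: "regular v" using ck2 unfolding S_def regular_def by auto
    define W where "W = insert [Vtx v] ((\<lambda>e. [Edg e, Ghost e]) ` S)"
    have fW: "finite W" using fS unfolding W_def by simp
    let ?q = "fa_diff (fa_word [Vtx v]) (\<lambda>w. \<Sum>e\<in>S. fa_word [Edg e, Ghost e] w)"
    have sq: "supp ?q \<subseteq> W" unfolding W_def supp_def fa_diff_def
    proof clarify
      fix w assume "fa_word [Vtx v] w - (\<Sum>e\<in>S. fa_word [Edg e, Ghost e] w) \<noteq> 0"
        "w \<notin> (\<lambda>e. [Edg e, Ghost e]) ` S"
      moreover have "(\<Sum>e\<in>S. fa_word [Edg e, Ghost e] w) = 0"
        using \<open>w \<notin> _\<close> by (intro sum.neutral) (auto simp: fa_word_def)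
      ultimately show "w = [Vtx v]" by (auto simp: fa_word_def split: if_splits)
    qed
    have "phi z Y ?q = 0" if z: "z \<in> Valid" for z Y
    proof -
      let ?f = "\<lambda>w. of_bool (act w z \<in> Some ` Y) :: complex"
      have "phi z Y ?q = (\<Sum>w\<in>W. (fa_word [Vtx v] w - (\<Sum>e\<in>S. fa_word [Edg e, Ghost e] w)) * ?f w)"
        using phi_sub[OF fW sq] unfolding fa_diff_def by simp
      also have "\<dots> = (\<Sum>w\<in>W. fa_word [Vtx v] w * ?f w) - (\<Sum>e\<in>S. \<Sum>w\<in>W. fa_word [Edg e, Ghost e] w * ?f w)"
        by (simp add: left_diff_distrib sum_subtractf sum_distrib_right sum.swap[of _ S])
      also have "\<dots> = ?f [Vtx v] - (\<Sum>e\<in>S. ?f [Edg e, Ghost e])"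
      proof -
        have "(\<Sum>w\<in>W. fa_word [Vtx v] w * ?f w) = ?f [Vtx v]" using fW by (rule sum_word) (simp add: W_def)
        moreover have "(\<Sum>w\<in>W. fa_word [Edg e, Ghost e] w * ?f w) = ?f [Edg e, Ghost e]" if "e \<in> S" for e
          using fW by (rule sum_word) (simp add: W_def that)
        ultimately show ?thesis by (simp cong: sum.cong)
      qed
      also have "\<dots> = 0"
      proof -
        obtain n u p where zz: "z = (n, u, p)" by (cases z)
        show ?thesis
        proof (cases "u = v")
          case False
          have "act [Edg e, Ghost e] z = None" if "e \<in> S" for e
            using False that zz by (auto simp: S_def)
          then show ?thesis using False zz by simp
        next
          case True
          obtain e0 where e0: "e0 \<in> Ed" "s e0 = v" "p 0 = Some e0"
            using Valid_reg[of n v p] z zz True reg by auto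
          have "act [Edg e, Ghost e] z = (if e = e0 then Some z else None)" if "e \<in> S" for e
            using that zz True e0 by (auto simp: S_def shift_tail)
          then have "(\<Sum>e\<in>S. ?f [Edg e, Ghost e]) = (\<Sum>e\<in>S. if e = e0 then ?f [Vtx v] else 0)"
            using True zz by (intro sum.cong) auto
          also have "\<dots> = ?f [Vtx v]" using fS e0 by (simp add: sum.delta S_def)
          finally show ?thesis by simp
        qed
      qed
      finally show ?thesis .
    qed
    then show ?case using finite_subset[OF sq fW] unfolding S_def by simp
  qed
next
  case (add p q)
  have sub: "supp (fa_add p q) \<subseteq> supp p \<union> supp q" by (auto simp: supp_def fa_add_def)
  have f: "finite (supp p \<union> supp q)" using add by simp
  have "phi z Y (fa_add p q) = 0" if "z \<in> Valid" for z Y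
  proof -
    have "phi z Y (fa_add p q) = phi z Y p + phi z Y q"
      unfolding phi_sub[OF f sub] phi_sub[OF f Un_upper1] phi_sub[OF f Un_upper2]
      by (simp add: fa_add_def distrib_right sum.distrib)
    then show ?thesis using add that by simp
  qed
  then show ?case using finite_subset[OF sub f] by simp
next
  case (smult c p)
  have sub: "supp (fa_smult c p) \<subseteq> supp p" by (auto simp: supp_def fa_smult_def)
  have f: "finite (supp p)" using smult by simp
  have "phi z Y (fa_smult c p) = 0" if "z \<in> Valid" for z Y
  proof -
    have "phi z Y (fa_smult c p) = c * phi z Y p"
      unfolding phi_sub[OF f sub] phi_sub[OF f subset_refl]
      by (simp add: fa_smult_def sum_distrib_left mult.assoc)
    then show ?thesis using smult that by simp
  qed
  then show ?case using finite_subset[OF sub f] by simp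
next
  case (lmult p g)
  have sub: "supp (fa_mult (fa_word [g]) p) \<subseteq> Cons g ` supp p"
  proof
    fix w assume "w \<in> supp (fa_mult (fa_word [g]) p)"
    then show "w \<in> Cons g ` supp p"
      by (cases w) (auto simp: supp_def lmult_eq split: if_splits)
  qed
  have f: "finite (Cons g ` supp p)" using lmult by simp
  have "phi z Y (fa_mult (fa_word [g]) p) = 0" if "z \<in> Valid" for z Y
  proof -
    let ?Y = "{y. gen_act g y \<in> Some ` Y}"
    have "phi z Y (fa_mult (fa_word [g]) p) = (\<Sum>w\<in>supp p. p w * of_bool (act (g # w) z \<in> Some ` Y))"
      by (simp add: phi_sub[OF f sub] sum.reindex lmult_eq)
    also have "\<dots> = phi z ?Y p" unfolding phi_def
      by (intro sum.cong refl) (auto split: Option.bind_splits)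
    finally show ?thesis using lmult that by simp
  qed
  then show ?case using finite_subset[OF sub f] by simp
next
  case (rmult p g)
  have sub: "supp (fa_mult p (fa_word [g])) \<subseteq> (\<lambda>w. w @ [g]) ` supp p"
  proof
    fix w assume "w \<in> supp (fa_mult p (fa_word [g]))"
    then have "w \<noteq> []" "last w = g" "butlast w \<in> supp p" by (auto simp: supp_def rmult_eq split: if_splits)
    then show "w \<in> (\<lambda>w. w @ [g]) ` supp p" by (metis append_butlast_last_id image_eqI)
  qed
  have f: "finite ((\<lambda>w. w @ [g]) ` supp p)" using rmult by simp
  have "phi z Y (fa_mult p (fa_word [g])) = 0" if z: "z \<in> Valid" for z Y
  proof -
    have inj: "inj (\<lambda>w. w @ [g])" by (auto simp: inj_def)
    have "phi z Y (fa_mult p (fa_word [g])) = (\<Sum>w\<in>supp p. p w * of_bool (act (w @ [g]) z \<in> Some ` Y))"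
      by (simp add: phi_sub[OF f sub] sum.reindex[OF inj_on_subset[OF inj subset_UNIV]] rmult_eq)
    also have "\<dots> = 0"
    proof (cases "gen_act g z")
      case None then show ?thesis by (simp add: act_append)
    next
      case (Some z')
      then have "z' \<in> Valid" using Valid_gen z by blast
      then have "phi z' Y p = 0" using rmult by blast
      then show ?thesis using Some by (simp add: act_append phi_def)
    qed
    finally show ?thesis .
  qed
  then show ?case using finite_subset[OF sub f] by simp
qed


fun endv :: "'v \<Rightarrow> 'e list \<Rightarrow> 'v" where
  "endv u [] = u"
| "endv u (e # g) = endv (r e) g"

lemma act_edges_valid:
  "chain u es \<Longrightarrow> act (map Edg es) (n, endv u es, tp (endv u es)) = Some (n + int (length es), u, bp u es)"
  by (induction es arbitrary: u) auto

lemma act_edges_shape: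
  "act (map Edg es) z = Some (n', u', p') \<Longrightarrow> n' = fst z + int (length es) \<and> (\<forall>i<length es. p' i = Some (es ! i))"
proof (induction es arbitrary: n' u' p')
  case Nil then show ?case by (cases z) auto
next
  case (Cons e es)
  obtain n1 u1 p1 where a: "act (map Edg es) z = Some (n1, u1, p1)"
    and g: "gen_act (Edg e) (n1, u1, p1) = Some (n', u', p')"
    using Cons.prems by (auto split: Option.bind_splits)
  have IH: "n1 = fst z + int (length es) \<and> (\<forall>i<length es. p1 i = Some (es ! i))" using Cons.IH[OF a] .
  have "n' = n1 + 1" "p' = shift e p1" using g by (auto split: if_splits)
  then show ?case using IH by (auto simp: less_Suc_eq_0_disj)
qed

end

lemma chain_path:
  "es \<noteq> [] \<Longrightarrow> set es \<subseteq> Ed \<Longrightarrow> (\<forall>i. Suc i < length es \<longrightarrow> r (es ! i) = s (es ! Suc i)) \<Longrightarrow>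
   chain Ed r s (s (hd es)) es"
proof (induction es)
  case Nil then show ?case by simp
next
  case (Cons e es)
  show ?case
  proof (cases es)
    case Nil then show ?thesis using Cons by simp
  next
    case (Cons e' es')
    have "r e = s (hd es)" using Cons.prems(3)[rule_format, of 0] Cons by simp
    moreover have "\<forall>i. Suc i < length es \<longrightarrow> r (es ! i) = s (es ! Suc i)"
    proof (intro allI impI)
      fix i assume "Suc i < length es"
      then show "r (es ! i) = s (es ! Suc i)" using Cons.prems(3)[rule_format, of "Suc i"] by simp
    qed
    then have "chain Ed r s (s (hd es)) es"
      using Cons.IH Cons.prems Cons by simp
    ultimately show ?thesis using Cons.prems by simp
  qed
qed

fun pw :: "('v, 'e) path \<Rightarrow> ('v, 'e) gen list" where
  "pw (PVtx v) = [Vtx v]"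
| "pw (PEdges es) = map Edg es"

lemma path_elt_pw: "path_elt a = fa_word (pw a)" by (cases a) auto


context
  fixes Ed :: "'e set" and r s :: "'e \<Rightarrow> 'v"
begin

lemma pw_det:
  assumes "act Ed r s (pw a) z = Some y" "act Ed r s (pw b) z = Some y"
    and "is_path V Ed r s a" "is_path V Ed r s b"
  shows "a = b"
proof -
  obtain n u p where zz: "z = (n, u, p)" by (cases z)
  show ?thesis
  proof (cases a)
    case (PVtx v)
    then have y: "y = z" "u = v" using assms(1) zz by (auto split: if_splits)
    show ?thesis
    proof (cases b)
      case (PVtx v') then show ?thesis using assms(2) zz y PVtx \<open>a = PVtx v\<close> by (auto split: if_splits)
    next
      case (PEdges es)
      then have "es \<noteq> []" using assms(4) by simp
      moreover obtain n' u' p' where "y = (n', u', p')" by (cases y)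
      ultimately show ?thesis using act_edges_shape[of Ed r s es z] assms(2) PEdges y by auto
    qed
  next
    case (PEdges es)
    obtain n' u' p' where yy: "y = (n', u', p')" by (cases y)
    have A: "n' = fst z + int (length es) \<and> (\<forall>i<length es. p' i = Some (es ! i))"
      using act_edges_shape[of Ed r s es z] assms(1) PEdges yy by auto
    show ?thesis
    proof (cases b)
      case (PVtx v')
      then have "y = z" using assms(2) zz by (auto split: if_splits)
      then show ?thesis using A yy zz PEdges assms(3) by auto
    next
      case (PEdges es')
      have B: "n' = fst z + int (length es') \<and> (\<forall>i<length es'. p' i = Some (es' ! i))"
        using act_edges_shape[of Ed r s es' z] assms(2) PEdges yy by auto
      have "es = es'" using A B by (auto intro: nth_equalityI)
      then show ?thesis using PEdges \<open>a = PEdges es\<close> by simp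
    qed
  qed
qed

lemma start_exists:
  assumes "is_path V Ed r s a"
  shows "\<exists>z y. z \<in> Valid Ed r s \<and> act Ed r s (pw a) z = Some y"
proof (cases a)
  case (PVtx v)
  have "(0::int, v, tp Ed r s v) \<in> Valid Ed r s" unfolding Valid_def
    by (auto intro!: exI[of _ "[]"])
  then show ?thesis using PVtx by auto
next
  case (PEdges es)
  have c: "chain Ed r s (s (hd es)) es" using assms PEdges by (auto intro: chain_path)
  let ?v = "endv r (s (hd es)) es"
  have "(0::int, ?v, tp Ed r s ?v) \<in> Valid Ed r s" unfolding Valid_def
    by (auto intro!: exI[of _ "[]"])
  then show ?thesis using PEdges act_edges_valid[OF c, of 0] by (metis pw.simps(2))
qed

lemma sum_in_R:
  assumes "conj_closed_unital_subring R" "\<forall>w. x w \<in> R" "finite S"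
  shows "(\<Sum>w\<in>S. x w * of_bool (P w)) \<in> R"
  using assms(3)
proof (induction S rule: finite_induct)
  case empty then show ?case using assms(1) by (simp add: conj_closed_unital_subring_def)
next
  case (insert a S)
  have "x a * of_bool (P a) \<in> R" using assms(1,2) by (auto simp: conj_closed_unital_subring_def)
  moreover have "(\<Sum>w\<in>S. x w * of_bool (P w)) \<in> R" by (fact insert.IH)
  ultimately have "x a * of_bool (P a) + (\<Sum>w\<in>S. x w * of_bool (P w)) \<in> R"
    using assms(1) unfolding conj_closed_unital_subring_def by blast
  then show ?case unfolding sum.insert[OF insert(1,2)] .
qed

lemma key:
  assumes "conj_closed_unital_subring R"
    and "ess_unique_partition_of_unit R"
    and "x \<in> free_alg R"
    and "is_path V Ed r s \<alpha>" and "is_path V Ed r s \<beta>"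
    and "leavitt_eq R V Ed r s (fa_smult 2 x) (fa_add (path_elt \<alpha>) (fa_smult lam (path_elt \<beta>)))"
  shows "\<alpha> = \<beta>"
proof (rule ccontr)
  assume ne: "\<alpha> \<noteq> \<beta>"
  obtain z y where z: "z \<in> Valid Ed r s" and ay: "act Ed r s (pw \<alpha>) z = Some y"
    using start_exists[OF assms(4)] by blast
  have nb: "act Ed r s (pw \<beta>) z \<noteq> Some y" using pw_det[OF ay _ assms(4,5)] ne by blast
  let ?q = "fa_diff (fa_smult 2 x) (fa_add (path_elt \<alpha>) (fa_smult lam (path_elt \<beta>)))"
  let ?f = "\<lambda>w. of_bool (act Ed r s w z \<in> Some ` {y}) :: complex"
  have qI: "?q \<in> leavitt_ideal R V Ed r s" using assms(6) unfolding leavitt_eq_def .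
  have ph: "phi Ed r s z {y} ?q = 0" using main_ind[OF qI] z by blast
  define S where "S = supp x \<union> {pw \<alpha>, pw \<beta>}"
  have fx: "finite (supp x)" using assms(3) by (simp add: free_alg_def supp_def)
  have fS: "finite S" using fx unfolding S_def by simp
  have sub: "supp ?q \<subseteq> S" unfolding S_def supp_def
    by (auto simp: fa_diff_def fa_add_def fa_smult_def path_elt_pw fa_word_def split: if_splits)
  define c where "c = (\<Sum>w\<in>S. x w * ?f w)"
  have "phi Ed r s z {y} ?q = (\<Sum>w\<in>S. ?q w * ?f w)" by (rule phi_sub[OF fS sub])
  also have "\<dots> = (\<Sum>w\<in>S. 2 * (x w * ?f w) - (fa_word (pw \<alpha>) w * ?f w + lam * (fa_word (pw \<beta>) w * ?f w)))"
    by (intro sum.cong refl) (simp add: fa_diff_def fa_add_def fa_smult_def path_elt_pw algebra_simps)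
  also have "\<dots> = 2 * c - ((\<Sum>w\<in>S. fa_word (pw \<alpha>) w * ?f w) + lam * (\<Sum>w\<in>S. fa_word (pw \<beta>) w * ?f w))"
    unfolding c_def by (simp add: sum_subtractf sum.distrib sum_distrib_left)
  also have "(\<Sum>w\<in>S. fa_word (pw \<alpha>) w * ?f w) = ?f (pw \<alpha>)" by (rule sum_word[OF fS]) (simp add: S_def)
  also have "(\<Sum>w\<in>S. fa_word (pw \<beta>) w * ?f w) = ?f (pw \<beta>)" by (rule sum_word[OF fS]) (simp add: S_def)
  finally have "2 * c - (1 + lam * 0) = 0" using ph ay nb by simp
  then have c: "c = 1/2" by (auto simp: field_simps)
  have cR: "c \<in> R" unfolding c_def
    by (rule sum_in_R[OF assms(1) _ fS]) (use assms(3) in \<open>simp add: free_alg_def\<close>)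
  have cm: "cmod c = 1/2" by (subst c) (simp add: norm_divide)
  have sm: "(\<Sum>i<4::nat. (cmod ((\<lambda>_. c) i))\<^sup>2) = 1" by (simp add: cm power2_eq_square)
  have "\<exists>j<(4::nat). \<forall>i<4. i \<noteq> j \<longrightarrow> (\<lambda>_. c) i = 0"
    using assms(2)[unfolded ess_unique_partition_of_unit_def, rule_format, of 4 "\<lambda>_. c"] cR sm by blast
  then obtain j :: nat where j: "\<forall>i<4. i \<noteq> j \<longrightarrow> c = 0" by auto
  have "(if j = 0 then 1 else 0) < (4::nat)" "(if j = 0 then 1 else 0) \<noteq> j" by auto
  then have "c = 0" using j by blast
  then show False using c by simp
qed

end

theorem lemma5p5:
  fixes V :: "'v set" and Ed :: "'e set" and r s :: "'e \<Rightarrow> 'v"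
    and R :: "complex set" and x :: "('v, 'e) fa" and lam :: complex
    and \<alpha> \<beta> :: "('v, 'e) path"
  assumes "is_graph V Ed r s"
    and "conj_closed_unital_subring R"
    and "ess_unique_partition_of_unit R"
    and "x \<in> free_alg R"
    and "lam \<in> R"
    and "is_path V Ed r s \<alpha>" and "is_path V Ed r s \<beta>"
    and "leavitt_eq R V Ed r s (fa_smult 2 x) (fa_add (path_elt \<alpha>) (fa_smult lam (path_elt \<beta>)))"
  shows "\<alpha> = \<beta>"
  using key[OF assms(2,3,4,6,7,8)] .

end
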